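(* Let $p\ge5$, let $\lambda$ be the leftmost assignment and $\alpha$ any assignment on the white metallic tree. For every positive integer $\nu$, let $\lambda_\ell(\nu)$ and $\alpha_\ell(\nu)$ be the leftmost (smallest) son of $\nu$ in $\mathcal W_\lambda$ and in $\mathcal W_\alpha$ respectively, and $\delta_{\lambda\alpha}(\nu)=\alpha_\ell(\nu)-\lambda_\ell(\nu)$. Then $0\le\delta_{\lambda\alpha}(\nu)\le 1$ for every $\nu$.
   Context: Fix $p\ge5$. White metallic tree under an assignment $\alpha$, $\mathcal W_\alpha$: nodes are the positive integers, each black or white; root $1$ is white; nodes are processed in increasing order and node $\nu$ receives $p-2$ sons if it is white and $p-3$ sons if it is black, namely the smallest integers not yet used, in increasing order; an assignment $\alpha$ specifies, for each node $\nu$, the position (among the sons of $\nu$, leftmost = position $1$) of its unique black son, all other sons being white (the position may depend on the node). The leftmost assignment $\lambda$ always puts the black son at position $1$. *)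

theory Defs
  imports Main
begin

text \<open>State after processing nodes 1..k: a list cs with cs ! m = (node m is black)
  for every already generated node m (index 0 is a dummy), and the first
  unused integer nx (invariant: length cs = nx).\<close>

primrec wmt :: "nat \<Rightarrow> (nat \<Rightarrow> nat) \<Rightarrow> nat \<Rightarrow> bool list \<times> nat" where
  "wmt p \<alpha> 0 = ([False, False], 2)"
| "wmt p \<alpha> (Suc k) =
     (let cs = fst (wmt p \<alpha> k); nx = snd (wmt p \<alpha> k);
          s = (if cs ! Suc k then p - 3 else p - 2)
      in (cs @ map (\<lambda>i. i = \<alpha> (Suc k)) [1..<Suc s], nx + s))"

text \<open>Colour of node m >= 1 (True = black), determined once nodes 1..m-1 are processed.\<close>
definition wm_black :: "nat \<Rightarrow> (nat \<Rightarrow> nat) \<Rightarrow> nat \<Rightarrow> bool" where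
  "wm_black p \<alpha> m = fst (wmt p \<alpha> (m - 1)) ! m"

definition wm_nsons :: "nat \<Rightarrow> (nat \<Rightarrow> nat) \<Rightarrow> nat \<Rightarrow> nat" where
  "wm_nsons p \<alpha> m = (if wm_black p \<alpha> m then p - 3 else p - 2)"

text \<open>Leftmost (smallest) son of node nu >= 1: the first unused integer after
  processing nodes 1..nu-1.\<close>
definition wm_leftson :: "nat \<Rightarrow> (nat \<Rightarrow> nat) \<Rightarrow> nat \<Rightarrow> nat" where
  "wm_leftson p \<alpha> \<nu> = snd (wmt p \<alpha> (\<nu> - 1))"

definition wm_assignment :: "nat \<Rightarrow> (nat \<Rightarrow> nat) \<Rightarrow> bool" where
  "wm_assignment p \<alpha> \<longleftrightarrow> (\<forall>\<nu>\<ge>1. 1 \<le> \<alpha> \<nu> \<and> \<alpha> \<nu> \<le> wm_nsons p \<alpha> \<nu>)"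

definition leftmost_assignment :: "nat \<Rightarrow> nat" where
  "leftmost_assignment = (\<lambda>_. 1)"

end

theory Submission
  imports Defs
begin

definition NN :: "nat \<Rightarrow> (nat \<Rightarrow> nat) \<Rightarrow> nat \<Rightarrow> nat" where
  "NN p a k = snd (wmt p a k)"
definition CC :: "nat \<Rightarrow> (nat \<Rightarrow> nat) \<Rightarrow> nat \<Rightarrow> bool list" where
  "CC p a k = fst (wmt p a k)"
definition bb :: "nat \<Rightarrow> (nat \<Rightarrow> nat) \<Rightarrow> nat \<Rightarrow> nat" where
  "bb p a v = NN p a (v - 1) + a v - 1"
definition BB :: "nat \<Rightarrow> (nat \<Rightarrow> nat) \<Rightarrow> nat \<Rightarrow> nat" where
  "BB p a k = card {m \<in> {1..k}. wm_black p a m}"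

lemma len: "length (CC p a k) = NN p a k"
  by (induction k) (auto simp: CC_def NN_def Let_def)

lemma Nsuc: "NN p a (Suc k) = NN p a k + wm_nsons p a (Suc k)"
  by (simp add: NN_def wm_nsons_def wm_black_def Let_def)

lemma Csuc: "CC p a (Suc k) = CC p a k @ map (\<lambda>i. i = a (Suc k)) [1..<Suc (wm_nsons p a (Suc k))]"
  by (simp add: CC_def wm_nsons_def wm_black_def Let_def)

lemma nsons_ge: "p \<ge> 5 \<Longrightarrow> wm_nsons p a m \<ge> 2"
  unfolding wm_nsons_def by (cases "wm_black p a m") auto

lemma N0: "NN p a 0 = 2" by (simp add: NN_def)

lemma Nmono: "k \<le> k' \<Longrightarrow> NN p a k \<le> NN p a k'"
proof (induction k' rule: dec_induct)
  case (step n) then show ?case using Nsuc[of p a n] by simp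
qed simp

lemma Nge: "p \<ge> 5 \<Longrightarrow> k + 2 \<le> NN p a k"
proof (induction k)
  case 0 then show ?case by (simp add: N0)
next
  case (Suc k) then show ?case using Nsuc[of p a k] nsons_ge[of p a "Suc k"] by simp
qed

lemma Cprefix: "k \<le> k' \<Longrightarrow> m < NN p a k \<Longrightarrow> CC p a k' ! m = CC p a k ! m"
proof (induction k' rule: dec_induct)
  case (step n)
  have "m < length (CC p a n)" using step Nmono[of k n p a] len[of p a n] by simp
  then show ?case using step by (simp add: Csuc nth_append)
qed simp

lemma Cblock: "NN p a k \<le> m \<Longrightarrow> m < NN p a (Suc k) \<Longrightarrow>
   CC p a (Suc k) ! m = (m - NN p a k + 1 = a (Suc k))"
proof -
  assume h: "NN p a k \<le> m" "m < NN p a (Suc k)"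
  have i: "m - NN p a k < wm_nsons p a (Suc k)" using h Nsuc[of p a k] by simp
  have "CC p a (Suc k) ! m = map (\<lambda>i. i = a (Suc k)) [1..<Suc (wm_nsons p a (Suc k))] ! (m - length (CC p a k))"
    using h by (simp add: Csuc nth_append len)
  also have "\<dots> = (m - NN p a k + 1 = a (Suc k))" using i by (simp add: len nth_map del: upt_Suc)
  finally show ?thesis .
qed

lemma black_C: "p \<ge> 5 \<Longrightarrow> m < NN p a K \<Longrightarrow> wm_black p a m = CC p a K ! m"
proof -
  assume p: "p \<ge> 5" and m: "m < NN p a K"
  have m2: "m < NN p a (m - 1)" using Nge[OF p, of "m - 1" a] by linarith
  have "CC p a (max K (m - 1)) ! m = CC p a K ! m" by (rule Cprefix[OF _ m]) simp
  moreover have "CC p a (max K (m - 1)) ! m = CC p a (m - 1) ! m" by (rule Cprefix[OF _ m2]) simp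
  ultimately show ?thesis by (simp add: wm_black_def CC_def)
qed

lemma col_block: "p \<ge> 5 \<Longrightarrow> v \<ge> 1 \<Longrightarrow> NN p a (v - 1) \<le> m \<Longrightarrow> m < NN p a v \<Longrightarrow>
   wm_black p a m = (m - NN p a (v - 1) + 1 = a v)"
  using black_C[of p m a v] Cblock[of p a "v - 1" m] by simp

lemma exists_block: "p \<ge> 5 \<Longrightarrow> m \<ge> 2 \<Longrightarrow> \<exists>v\<ge>1. NN p a (v - 1) \<le> m \<and> m < NN p a v"
proof -
  assume p: "p \<ge> 5" and m: "m \<ge> 2"
  define v where "v = (LEAST v. m < NN p a v)"
  have ex: "m < NN p a m" using Nge[OF p, of m a] by linarith
  have v1: "m < NN p a v" unfolding v_def by (rule LeastI[of _ m], rule ex)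
  have v0: "v \<noteq> 0" using v1 m N0[of p a] by (cases v) auto
  have "\<not> m < NN p a (v - 1)" unfolding v_def
    by (rule not_less_Least) (use v0 in \<open>simp add: v_def\<close>)
  then show ?thesis using v0 v1 by (intro exI[of _ v]) auto
qed

lemma valid_bb: assumes p: "p \<ge> 5" and A: "wm_assignment p a" and v: "v \<ge> 1"
  shows "NN p a (v - 1) \<le> bb p a v" "bb p a v < NN p a v"
proof -
  have "1 \<le> a v" "a v \<le> wm_nsons p a v" using A v by (auto simp: wm_assignment_def)
  moreover have "NN p a v = NN p a (v - 1) + wm_nsons p a v" using Nsuc[of p a "v - 1"] v by simp
  ultimately show "NN p a (v - 1) \<le> bb p a v" "bb p a v < NN p a v" by (auto simp: bb_def)
qed

lemma black_iff: assumes p: "p \<ge> 5" and A: "wm_assignment p a" and m: "m \<ge> 1"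
  shows "wm_black p a m = (\<exists>v\<ge>1. m = bb p a v)"
proof
  assume b: "wm_black p a m"
  have "m \<noteq> 1" using b by (auto simp: wm_black_def)
  then obtain v where v: "v \<ge> 1" "NN p a (v - 1) \<le> m" "m < NN p a v"
    using exists_block[OF p, of m a] m by auto
  have "m - NN p a (v - 1) + 1 = a v" using col_block[OF p v] b by simp
  then have "m = bb p a v" using v by (auto simp: bb_def)
  then show "\<exists>v\<ge>1. m = bb p a v" using v by auto
next
  assume "\<exists>v\<ge>1. m = bb p a v"
  then obtain v where v: "v \<ge> 1" "m = bb p a v" by auto
  have "1 \<le> a v" using A v by (auto simp: wm_assignment_def)
  have r: "NN p a (v - 1) \<le> m" "m < NN p a v" using valid_bb[OF p A v(1)] v(2) by simp_all
  have "m - NN p a (v - 1) + 1 = a v" using \<open>1 \<le> a v\<close> v(2) unfolding bb_def by simp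
  then show "wm_black p a m" using col_block[OF p v(1) r] by simp
qed

lemma NB: "NN p a k + BB p a k = 2 + (p - 2) * k" if p: "p \<ge> 5"
proof (induction k)
  case 0 then show ?case by (simp add: N0 BB_def)
next
  case (Suc k)
  have s: "{m \<in> {1..Suc k}. wm_black p a m} = {m \<in> {1..k}. wm_black p a m} \<union>
      (if wm_black p a (Suc k) then {Suc k} else {})" by (auto simp: le_Suc_eq)
  have "BB p a (Suc k) = BB p a k + (if wm_black p a (Suc k) then 1 else 0)"
    unfolding BB_def s by auto
  moreover obtain q where q: "p = q + 5" using p by (metis add.commute le_Suc_ex)
  ultimately show ?case using Suc Nsuc[of p a k] by (auto simp: wm_nsons_def algebra_simps)
qed

lemma bb_mono: assumes p: "p \<ge> 5" and A: "wm_assignment p a" and v: "v \<ge> 1" and vu: "v < u"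
  shows "bb p a v < bb p a u"
proof -
  have "bb p a v < NN p a v" using valid_bb[OF p A v] by simp
  also have "\<dots> \<le> NN p a (u - 1)" using Nmono vu by simp
  also have "\<dots> \<le> bb p a u" using valid_bb[OF p A] v vu by simp
  finally show ?thesis .
qed

lemma bb_ge: assumes p: "p \<ge> 5" and A: "wm_assignment p a" and v: "v \<ge> 1"
  shows "bb p a v \<ge> v + 1"
  using valid_bb[OF p A v] Nge[OF p, of "v - 1" a] v by simp

lemma BB_card: assumes p: "p \<ge> 5" and A: "wm_assignment p a"
  shows "BB p a k = card {v. 1 \<le> v \<and> bb p a v \<le> k}"
proof -
  have "{m \<in> {1..k}. wm_black p a m} = bb p a ` {v. 1 \<le> v \<and> bb p a v \<le> k}"
  proof (rule set_eqI, rule iffI)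
    fix m assume "m \<in> {m \<in> {1..k}. wm_black p a m}"
    then have m: "1 \<le> m" "m \<le> k" "wm_black p a m" by auto
    then obtain v where "v \<ge> 1" "m = bb p a v" using black_iff[OF p A m(1)] by blast
    then show "m \<in> bb p a ` {v. 1 \<le> v \<and> bb p a v \<le> k}" using m by blast
  next
    fix m assume "m \<in> bb p a ` {v. 1 \<le> v \<and> bb p a v \<le> k}"
    then obtain v where v: "1 \<le> v" "bb p a v \<le> k" "m = bb p a v" by blast
    have m1: "1 \<le> m" using bb_ge[OF p A v(1)] v by simp
    have "wm_black p a m" using black_iff[OF p A m1] v by blast
    then show "m \<in> {m \<in> {1..k}. wm_black p a m}" using m1 v by simp
  qed
  moreover have "inj_on (bb p a) {v. 1 \<le> v \<and> bb p a v \<le> k}"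
  proof (rule inj_onI)
    fix x y assume x: "x \<in> {v. 1 \<le> v \<and> bb p a v \<le> k}" and y: "y \<in> {v. 1 \<le> v \<and> bb p a v \<le> k}"
      and e: "bb p a x = bb p a y"
    show "x = y"
    proof (rule linorder_cases[of x y])
      assume "x < y" then show ?thesis using bb_mono[OF p A _ \<open>x < y\<close>] x e by simp
    next
      assume "y < x" then show ?thesis using bb_mono[OF p A _ \<open>y < x\<close>] y e by simp
    qed
  qed
  ultimately show ?thesis unfolding BB_def by (simp add: card_image)
qed

lemma lm_valid: assumes "p \<ge> 5" shows "wm_assignment p leftmost_assignment"
proof -
  have "\<And>v. 2 \<le> wm_nsons p leftmost_assignment v" using nsons_ge assms by blast
  moreover have "\<And>v. leftmost_assignment v = 1" by (simp add: leftmost_assignment_def)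
  ultimately show ?thesis unfolding wm_assignment_def by (metis le_refl one_le_numeral order.trans)
qed

lemma main: assumes p: "p \<ge> 5" and A: "wm_assignment p a"
  shows "NN p leftmost_assignment k \<le> NN p a k \<and> NN p a k \<le> NN p leftmost_assignment k + 1"
  using p A
proof (induction k rule: less_induct)
  case (less k)
  let ?l = leftmost_assignment
  have L: "wm_assignment p ?l" using lm_valid p by simp
  define Sa where "Sa = {v. 1 \<le> v \<and> bb p a v \<le> k}"
  define Sl where "Sl = {v. 1 \<le> v \<and> bb p ?l v \<le> k}"
  have fa: "finite Sa" unfolding Sa_def
    by (rule finite_subset[of _ "{..k}"]) (use bb_ge[OF p A] in fastforce)+
  have bl: "bb p ?l v = NN p ?l (v - 1)" for v by (simp add: bb_def leftmost_assignment_def)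
  have sub1: "Sa \<subseteq> Sl"
  proof
    fix v assume "v \<in> Sa"
    then have v: "v \<ge> 1" "bb p a v \<le> k" by (auto simp: Sa_def)
    have "v - 1 < k" using bb_ge[OF p A v(1)] v by simp
    then have "NN p ?l (v - 1) \<le> NN p a (v - 1)" using less.IH p A by blast
    then show "v \<in> Sl" using valid_bb[OF p A v(1)] v bl by (auto simp: Sl_def)
  qed
  have sub2: "Sl \<subseteq> insert 1 (Suc ` Sa)"
  proof
    fix v assume "v \<in> Sl"
    then have v: "v \<ge> 1" "bb p ?l v \<le> k" by (auto simp: Sl_def)
    show "v \<in> insert 1 (Suc ` Sa)"
    proof (cases "v = 1")
      case False
      then have u: "v - 1 \<ge> 1" using v by simp
      have "v - 1 < k" using bb_ge[OF p L v(1)] v by simp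
      then have "NN p a (v - 1) \<le> NN p ?l (v - 1) + 1" using less.IH p A by blast
      moreover have "bb p a (v - 1) < NN p a (v - 1)" using valid_bb[OF p A u] u
        by (metis Suc_diff_1 diff_Suc_1 less_le_trans order.refl)
      ultimately have "bb p a (v - 1) \<le> k" using v bl by simp
      then have "v - 1 \<in> Sa" using u by (simp add: Sa_def)
      moreover have "v = Suc (v - 1)" using u by simp
      ultimately show ?thesis by blast
    qed simp
  qed
  have fl: "finite Sl" using finite_subset[OF sub2] fa by simp
  have c1: "card Sa \<le> card Sl" using card_mono[OF fl sub1] .
  have "card Sl \<le> card (insert 1 (Suc ` Sa))" using card_mono[OF _ sub2] fa by simp
  also have "\<dots> \<le> card (Suc ` Sa) + 1" using fa by (simp add: card_insert_if)
  also have "\<dots> \<le> card Sa + 1" using card_image_le[OF fa, of Suc] by simp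
  finally have c2: "card Sl \<le> card Sa + 1" .
  have "NN p a k + card Sa = NN p ?l k + card Sl"
    using NB[OF p, of a k] NB[OF p, of ?l k] BB_card[OF p A, of k] BB_card[OF p L, of k]
    by (simp add: Sa_def Sl_def)
  then show ?case using c1 c2 by linarith
qed

theorem lemma6:
  fixes p :: nat and \<alpha> :: "nat \<Rightarrow> nat" and \<nu> :: nat
  assumes "p \<ge> 5"
    and "wm_assignment p \<alpha>"
    and "\<nu> \<ge> 1"
  shows "wm_leftson p leftmost_assignment \<nu> \<le> wm_leftson p \<alpha> \<nu>
       \<and> wm_leftson p \<alpha> \<nu> \<le> wm_leftson p leftmost_assignment \<nu> + 1"
  using main[OF assms(1,2), of "\<nu> - 1"] by (simp add: wm_leftson_def NN_def)

end
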